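(* Let $0<\delta<1$ and let $f(X)=N(N-1)\sum_{i=1}^{\ell}\beta_i\,t(H_i,X)$ be a subgraph-counting function. Then there exists a constant $C_\delta>0$, depending on $\delta$, the graphs $H_i$ and the weights $\beta_i$ but otherwise independent of $N$, such that for every $X\in\mathcal X_f$ there exists a block matrix $X^*$ with at most $C_\delta$ communities satisfying $$\|X-X^*\|_1\le \delta n+5000\,C_{\boldsymbol\beta}^2\,n^{15/16}.$$
   Context: Fix an integer $N\ge2$, $n=\binom N2$. Vectors $X\in[0,1]^n$ are identified with symmetric $N\times N$ matrices with zero diagonal, entries indexed by unordered pairs $\{i,j\}$, $i\ne j$. For a finite simple graph $H$ on $[m]$, $t(H,X)=\frac{1}{N(N-1)\cdots(N-m+1)}\sum_{q}\prod_{\{l,l'\}\in E(H)}X_{q_lq_{l'}}$, summing over injective $q:[m]\to[N]$. For an edge index $e$, $\partial_ef(X)=\frac12(f(X^{e\leftarrow1})-f(X^{e\leftarrow0}))$ ($X^{e\leftarrow a}$: coordinate $e$ replaced by $a$), $\nabla f(X)=(\partial_ef(X))_e$. $\mathbf 1$ is the matrix with zero diagonal and off-diagonal entries $1$; $\tanh$ acts entrywise; $\|\cdot\|_1$ is the entrywise $\ell^1$ norm. $C_{\boldsymbol\beta}=\max\{12\sum_i|\beta_i||E(H_i)|^2,2\}$ and $\mathcal X_f=\{X\in[0,1]^n:\|X-\frac{\mathbf 1+\tanh(\nabla f(X))}{2}\|_1\le5000C_{\boldsymbol\beta}^2n^{15/16}\}$. A symmetric matrix $X^*\in\mathbb R^{N\times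 N}$ is a block matrix with $k$ communities if there exist a symmetric $P\in\mathbb R^{k\times k}$ and a partition of $[N]$ into disjoint sets $V_1,\dots,V_k$ (the communities) such that $X^*_{ij}=P_{\ell_1\ell_2}$ whenever $i\in V_{\ell_1}$, $j\in V_{\ell_2}$. *)

theory Defs
  imports Complex_Main
begin

text \<open>Unordered pairs {i,j}, i < j, of vertices in [N] = {0..<N}; these index
  the n = N choose 2 coordinates of X.\<close>
definition pairs :: "nat \<Rightarrow> nat set set" where
  "pairs N = {e. \<exists>i j. i < j \<and> j < N \<and> e = {i, j}}"

definition simple_graph :: "nat \<Rightarrow> nat set set \<Rightarrow> bool" where
  "simple_graph m E \<longleftrightarrow> E \<subseteq> pairs m"

definition inj_maps :: "nat \<Rightarrow> nat \<Rightarrow> (nat \<Rightarrow> nat) set" where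
  "inj_maps m N = {q. (\<forall>l<m. q l < N) \<and> inj_on q {..<m} \<and> (\<forall>l\<ge>m. q l = 0)}"

definition tdens :: "nat \<Rightarrow> nat set set \<Rightarrow> nat \<Rightarrow> (nat set \<Rightarrow> real) \<Rightarrow> real" where
  "tdens m E N X = (1 / (\<Prod>r<m. real N - real r)) *
      (\<Sum>q\<in>inj_maps m N. \<Prod>e\<in>E. X (q ` e))"

definition fsub :: "nat \<Rightarrow> (nat \<Rightarrow> nat) \<Rightarrow> (nat \<Rightarrow> nat set set) \<Rightarrow> (nat \<Rightarrow> real)
    \<Rightarrow> nat \<Rightarrow> (nat set \<Rightarrow> real) \<Rightarrow> real" where
  "fsub L m E \<beta> N X = real N * (real N - 1) * (\<Sum>i<L. \<beta> i * tdens (m i) (E i) N X)"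

definition pderiv_e :: "((nat set \<Rightarrow> real) \<Rightarrow> real) \<Rightarrow> nat set \<Rightarrow> (nat set \<Rightarrow> real) \<Rightarrow> real" where
  "pderiv_e f e X = (f (X(e := 1)) - f (X(e := 0))) / 2"


definition Cbeta :: "nat \<Rightarrow> (nat \<Rightarrow> nat set set) \<Rightarrow> (nat \<Rightarrow> real) \<Rightarrow> real" where
  "Cbeta L E \<beta> = max (12 * (\<Sum>i<L. \<bar>\<beta> i\<bar> * real (card (E i)) ^ 2)) 2"

text \<open>The set \<X>_f of near-fixed points of the mean-field equation, for a given N.\<close>
definition Xf :: "nat \<Rightarrow> (nat \<Rightarrow> nat) \<Rightarrow> (nat \<Rightarrow> nat set set) \<Rightarrow> (nat \<Rightarrow> real)
    \<Rightarrow> nat \<Rightarrow> (nat set \<Rightarrow> real) set" where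
  "Xf L m E \<beta> N = {X. (\<forall>e\<in>pairs N. 0 \<le> X e \<and> X e \<le> 1) \<and>
      (\<Sum>e\<in>pairs N. \<bar>X e - (1 + tanh (pderiv_e (fsub L m E \<beta> N) e X)) / 2\<bar>)
        \<le> 5000 * Cbeta L E \<beta> ^ 2 * real (N choose 2) powr (15/16)}"

definition block_matrix :: "nat \<Rightarrow> nat \<Rightarrow> (nat \<Rightarrow> nat \<Rightarrow> real) \<Rightarrow> bool" where
  "block_matrix N k Xs \<longleftrightarrow>
     (\<exists>P :: nat \<Rightarrow> nat \<Rightarrow> real. \<exists>V :: nat \<Rightarrow> nat set.
        (\<forall>a<k. \<forall>b<k. P a b = P b a) \<and>
        (\<forall>a<k. \<forall>b<k. a \<noteq> b \<longrightarrow> V a \<inter> V b = {}) \<and>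
        (\<Union>a<k. V a) = {..<N} \<and>
        (\<forall>a<k. \<forall>b<k. \<forall>i\<in>V a. \<forall>j\<in>V b. Xs i j = P a b))"

definition dist1 :: "nat \<Rightarrow> (nat set \<Rightarrow> real) \<Rightarrow> (nat \<Rightarrow> nat \<Rightarrow> real) \<Rightarrow> real" where
  "dist1 N X Xs = (\<Sum>(i, j)\<in>{(i, j). i < j \<and> j < N}. \<bar>X {i, j} - Xs i j\<bar>)"

end

theory Submission
  imports Defs "HOL-Library.FuncSet"
begin

lemma tanh_lip: "\<bar>tanh (x::real) - tanh y\<bar> \<le> \<bar>x - y\<bar>"
proof -
  have key: "tanh b - tanh a \<le> b - a \<and> 0 \<le> tanh b - tanh a" if "a < b" for a b :: real
  proof -
    have "\<And>x. a \<le> x \<Longrightarrow> x \<le> b \<Longrightarrow> DERIV tanh x :> 1 - tanh x ^ 2"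
      using has_field_derivative_tanh[OF cosh_real_nonzero DERIV_ident] by simp
    from MVT2[OF that this] obtain z where "tanh b - tanh a = (b - a) * (1 - tanh z ^ 2)" by blast
    moreover have "0 \<le> 1 - tanh z ^ 2" "1 - tanh z ^ 2 \<le> 1"
      using tanh_real_bounds[of z] by (auto simp: abs_square_le_1 power2_eq_square)
         (smt (verit) mult_le_one mult_minus_left mult_minus_right)+
    ultimately show ?thesis using that
      by (simp add: mult_le_cancel_left1 mult_nonneg_nonneg)
  qed
  show ?thesis
    by (cases x y rule: linorder_cases) (use key[of x y] key[of y x] in auto)
qed

lemma avg_exists:
  fixes p f :: "'z \<Rightarrow> real"
  assumes "finite Z" "Z \<noteq> {}" "\<forall>z\<in>Z. p z \<ge> 0" "sum p Z = 1"
  shows "\<exists>z\<in>Z. f z \<le> (\<Sum>z\<in>Z. p z * f z)"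
proof -
  let ?m = "Min (f ` Z)"
  have "?m \<in> f ` Z" using assms by (intro Min_in) auto
  then obtain z0 where z0: "z0 \<in> Z" "f z0 = ?m" by auto
  have "(\<Sum>z\<in>Z. p z * f z) \<ge> (\<Sum>z\<in>Z. p z * ?m)"
    by (rule sum_mono) (use assms in \<open>auto intro!: mult_left_mono\<close>)
  also have "(\<Sum>z\<in>Z. p z * ?m) = ?m" using assms(4) by (simp add: sum_distrib_right[symmetric])
  finally show ?thesis using z0 by metis
qed

lemma var_step:
  fixes p :: "'z \<Rightarrow> real"
  assumes "finite Z" "sum p Z = 1" "d = (\<Sum>z\<in>Z. p z * y z)"
  shows "(\<Sum>z\<in>Z. p z * (c + y z - d)\<^sup>2) = c\<^sup>2 + (\<Sum>z\<in>Z. p z * (y z - d)\<^sup>2)"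
proof -
  have e: "\<And>z. p z * (c + y z - d)\<^sup>2 = p z * c\<^sup>2 + 2 * c * (p z * y z - p z * d) + p z * (y z - d)\<^sup>2"
    by (simp add: power2_eq_square algebra_simps)
  have "(\<Sum>z\<in>Z. p z * (c + y z - d)\<^sup>2) = (\<Sum>z\<in>Z. p z) * c\<^sup>2 + 2 * c * ((\<Sum>z\<in>Z. p z * y z) - (\<Sum>z\<in>Z. p z) * d) + (\<Sum>z\<in>Z. p z * (y z - d)\<^sup>2)"
    unfolding e by (simp add: sum.distrib sum_distrib_left[symmetric] sum_distrib_right sum_subtractf)
  then show ?thesis using assms by simp
qed

lemma sampling:
  fixes Z :: "'z set" and I :: "'i set" and p :: "'z \<Rightarrow> real" and Y :: "'z \<Rightarrow> 'i \<Rightarrow> real"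
  assumes fZ: "finite Z" and ne: "Z \<noteq> {}" and fI: "finite I" and p0: "\<forall>z\<in>Z. p z \<ge> 0"
    and p1: "sum p Z = 1" and D: "\<forall>\<iota>\<in>I. D \<iota> = (\<Sum>z\<in>Z. p z * Y z \<iota>)"
  shows "\<exists>\<zeta>. (\<forall>t<s. \<zeta> t \<in> Z) \<and> (\<Sum>\<iota>\<in>I. (\<Sum>t<s. Y (\<zeta> t) \<iota> - D \<iota>)\<^sup>2)
            \<le> real s * (\<Sum>z\<in>Z. p z * (\<Sum>\<iota>\<in>I. (Y z \<iota> - D \<iota>)\<^sup>2))"
proof (induction s)
  case 0
  then show ?case by simp
next
  case (Suc s)
  let ?V = "(\<Sum>z\<in>Z. p z * (\<Sum>\<iota>\<in>I. (Y z \<iota> - D \<iota>)\<^sup>2))"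
  from Suc obtain \<zeta> where z1: "\<forall>t<s. \<zeta> t \<in> Z"
    and z2: "(\<Sum>\<iota>\<in>I. (\<Sum>t<s. Y (\<zeta> t) \<iota> - D \<iota>)\<^sup>2) \<le> real s * ?V" by blast
  define c where "c \<iota> = (\<Sum>t<s. Y (\<zeta> t) \<iota> - D \<iota>)" for \<iota>
  define F where "F z = (\<Sum>\<iota>\<in>I. (c \<iota> + Y z \<iota> - D \<iota>)\<^sup>2)" for z
  have "(\<Sum>z\<in>Z. p z * F z) = (\<Sum>\<iota>\<in>I. (\<Sum>z\<in>Z. p z * (c \<iota> + Y z \<iota> - D \<iota>)\<^sup>2))"
    unfolding F_def sum_distrib_left by (rule sum.swap)
  also have "\<dots> = (\<Sum>\<iota>\<in>I. (c \<iota>)\<^sup>2 + (\<Sum>z\<in>Z. p z * (Y z \<iota> - D \<iota>)\<^sup>2))"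
    by (rule sum.cong[OF refl], rule var_step) (use fZ p1 D in auto)
  also have "\<dots> = (\<Sum>\<iota>\<in>I. (c \<iota>)\<^sup>2) + ?V"
    by (simp add: sum.distrib sum_distrib_left sum.swap[of _ Z I])
  finally have avg: "(\<Sum>z\<in>Z. p z * F z) = (\<Sum>\<iota>\<in>I. (c \<iota>)\<^sup>2) + ?V" .
  obtain z where zZ: "z \<in> Z" and zF: "F z \<le> (\<Sum>z\<in>Z. p z * F z)"
    using avg_exists[OF fZ ne p0 p1] by blast
  define \<zeta>' where "\<zeta>' = \<zeta>(s := z)"
  have "(\<Sum>t<Suc s. Y (\<zeta>' t) \<iota> - D \<iota>) = c \<iota> + Y z \<iota> - D \<iota>" for \<iota>
    unfolding c_def \<zeta>'_def by (simp add: sum.lessThan_Suc)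
  then have "(\<Sum>\<iota>\<in>I. (\<Sum>t<Suc s. Y (\<zeta>' t) \<iota> - D \<iota>)\<^sup>2) = F z" unfolding F_def
    by (intro sum.cong) (simp_all del: sum.lessThan_Suc)
  also have "\<dots> \<le> real s * ?V + ?V" using zF avg z2 c_def by simp
  also have "\<dots> = real (Suc s) * ?V" by (simp add: algebra_simps)
  finally show ?case using z1 zZ unfolding \<zeta>'_def by (intro exI[of _ "\<zeta>(s := z)"]) (auto simp: less_Suc_eq)
qed

definition Kset :: "nat \<Rightarrow> nat \<Rightarrow> ((nat \<Rightarrow> int) \<times> (nat \<Rightarrow> int)) set" where
  "Kset s M = PiE {..<s} (\<lambda>_. {-int M..int M}) \<times> PiE {..<s} (\<lambda>_. {-int M..int M})"

definition rd :: "nat \<Rightarrow> real \<Rightarrow> int" where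
  "rd M x = \<lfloor>max (-1) (min 1 x) * real M\<rfloor>"

lemma finite_Kset: "finite (Kset s M)"
  unfolding Kset_def by (intro finite_cartesian_product finite_PiE) auto

lemma card_Kset: "card (Kset s M) = (2*M+1)^(2*s)"
proof -
  have c1: "card {-int M..int M} = 2*M+1" by (simp; presburger)
  have c2: "card (PiE {..<s} (\<lambda>_. {-int M..int M})) = (2*M+1)^s" by (simp add: card_PiE c1 del: card_atLeastAtMost_int)
  show ?thesis unfolding Kset_def card_cartesian_product c2 by (simp add: power_add[symmetric] mult_2)
qed

lemma rd_range: "M > 0 \<Longrightarrow> rd M x \<in> {-int M..int M}"
proof -
  assume M: "M > 0"
  define y where "y = max (-1) (min 1 x)"
  have y1: "-1 \<le> y" "y \<le> 1" unfolding y_def by auto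
  have "y * M \<le> 1 * real M" by (rule mult_right_mono) (use y1 in auto)
  then have a: "\<lfloor>y * M\<rfloor> \<le> \<lfloor>real M\<rfloor>" by (intro floor_mono) simp
  have "(-1) * real M \<le> y * M" by (rule mult_right_mono) (use y1 in auto)
  then have b: "\<lfloor>- real M\<rfloor> \<le> \<lfloor>y * M\<rfloor>" by (intro floor_mono) simp
  have "\<lfloor>- real M\<rfloor> = - int M" by (metis floor_of_int of_int_minus of_int_of_nat_eq)
  then show ?thesis using a b unfolding rd_def y_def[symmetric] by simp
qed

lemma rd_err: assumes "M > 0" "\<bar>x\<bar> \<le> 1"
  shows "\<bar>real_of_int (rd M x) / M - x\<bar> \<le> 1 / M" "\<bar>real_of_int (rd M x) / M\<bar> \<le> 1"
proof -
  have y: "max (-1) (min 1 x) = x" using assms by auto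
  have "x * M - 1 < rd M x" "rd M x \<le> x * M" unfolding rd_def y by linarith+
  then have "\<bar>rd M x - x * M\<bar> \<le> 1" by linarith
  moreover have "\<bar>(rd M x - x * M) / M\<bar> = \<bar>rd M x - x * M\<bar> / M" using assms by (simp add: abs_divide)
  ultimately have "\<bar>(rd M x - x * M) / M\<bar> \<le> 1 / M" using assms
    by (metis divide_right_mono of_nat_0_le_iff)
  moreover have "(rd M x - x * M) / M = rd M x / M - x" using assms by (simp add: field_simps)
  ultimately show "\<bar>real_of_int (rd M x) / M - x\<bar> \<le> 1 / M" by simp
  have "rd M x \<in> {-int M..int M}" using rd_range assms by blast
  then have "\<bar>real_of_int (rd M x)\<bar> \<le> M"
    by (auto simp: abs_le_iff)
  then show "\<bar>real_of_int (rd M x) / M\<bar> \<le> 1" using assms by (simp add: abs_divide)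
qed

lemma prod_err:
  fixes x y x' y' h :: real
  assumes "\<bar>x\<bar> \<le> 1" "\<bar>y\<bar> \<le> 1" "\<bar>x' - x\<bar> \<le> h" "\<bar>y' - y\<bar> \<le> h" "\<bar>x'\<bar> \<le> 1"
  shows "\<bar>x * y - x' * y'\<bar> \<le> 2 * h"
proof -
  have "x * y - x' * y' = (x - x') * y + x' * (y - y')" by (simp add: algebra_simps)
  also have "\<bar>\<dots>\<bar> \<le> \<bar>x - x'\<bar> * \<bar>y\<bar> + \<bar>x'\<bar> * \<bar>y - y'\<bar>" by (simp add: abs_mult abs_triangle_ineq[THEN order_trans])
  also have "\<dots> \<le> h * 1 + 1 * h"
    using assms by (intro add_mono mult_mono) (auto simp: abs_minus_commute)
  finally show ?thesis by simp
qed

lemma abs_le_sq: "(c::real) > 0 \<Longrightarrow> \<bar>x\<bar> \<le> x\<^sup>2 / (2 * c) + c / 2"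
proof -
  assume c: "c > 0"
  have "0 \<le> (\<bar>x\<bar> - c)\<^sup>2" by simp
  then have "2 * c * \<bar>x\<bar> \<le> x\<^sup>2 + c\<^sup>2" by (simp add: power2_eq_square algebra_simps)
  then show ?thesis using c by (simp add: field_simps power2_eq_square)
qed

lemma approx:
  fixes Z :: "'z set" and w :: "'z \<Rightarrow> real" and a g :: "nat \<Rightarrow> 'z \<Rightarrow> real"
  assumes fZ: "finite Z" and ab: "\<forall>i<N. \<forall>z\<in>Z. \<bar>a i z\<bar> \<le> 1 \<and> \<bar>g i z\<bar> \<le> 1"
    and WB: "(\<Sum>z\<in>Z. \<bar>w z\<bar>) \<le> B" and s: "s > 0" and M: "M > 0" and eps: "\<epsilon> > 0"
    and sB: "4 * B\<^sup>2 \<le> real s * \<epsilon>\<^sup>2"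
  shows "\<exists>\<kappa> Gh. (\<forall>i<N. \<kappa> i \<in> Kset s M) \<and>
     (\<Sum>i<N. \<Sum>j<N. \<bar>(\<Sum>z\<in>Z. w z * a i z * g j z) - Gh (\<kappa> i) (\<kappa> j)\<bar>) \<le> real N ^ 2 * (\<epsilon> + 2 * B / M)"
proof -
  define W where "W = (\<Sum>z\<in>Z. \<bar>w z\<bar>)"
  have W0: "W \<ge> 0" unfolding W_def by (simp add: sum_nonneg)
  have B0: "B \<ge> 0" using W0 WB unfolding W_def by linarith
  have rhs0: "0 \<le> real N ^ 2 * (\<epsilon> + 2 * B / M)" using B0 eps by simp
  show ?thesis
  proof (cases "W = 0")
    case True
    then have wz: "\<forall>z\<in>Z. w z = 0" unfolding W_def using fZ by (simp add: sum_nonneg_eq_0_iff)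
    define k0 where "k0 = (restrict (\<lambda>_. 0::int) {..<s}, restrict (\<lambda>_. 0::int) {..<s})"
    have "k0 \<in> Kset s M" unfolding k0_def Kset_def by auto
    then show ?thesis using rhs0 wz
      by (intro exI[of _ "\<lambda>_. k0"] exI[of _ "\<lambda>_ _. 0"]) simp
  next
    case False
    then have Wp: "W > 0" using W0 by simp
    have Zne: "Z \<noteq> {}" using Wp unfolding W_def by auto
    define p where "p z = \<bar>w z\<bar> / W" for z
    define I where "I = {..<N} \<times> {..<N}"
    define Y where "Y z \<iota> = W * sgn (w z) * a (fst \<iota>) z * g (snd \<iota>) z" for z \<iota>
    define D where "D \<iota> = (\<Sum>z\<in>Z. w z * a (fst \<iota>) z * g (snd \<iota>) z)" for \<iota>
    have p0: "\<forall>z\<in>Z. p z \<ge> 0" unfolding p_def using Wp by simp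
    have p1: "sum p Z = 1" unfolding p_def using Wp by (simp add: sum_divide_distrib[symmetric] W_def)
    have pY: "p z * Y z \<iota> = w z * a (fst \<iota>) z * g (snd \<iota>) z" for z \<iota>
    proof -
      have "p z * Y z \<iota> = (\<bar>w z\<bar> * sgn (w z)) * a (fst \<iota>) z * g (snd \<iota>) z"
        unfolding p_def Y_def using Wp by (simp add: field_simps)
      then show ?thesis by (simp add: abs_mult_sgn)
    qed
    have DY: "\<forall>\<iota>\<in>I. D \<iota> = (\<Sum>z\<in>Z. p z * Y z \<iota>)" unfolding D_def pY by simp
    have fI: "finite I" unfolding I_def by simp
    obtain \<zeta> where \<zeta>Z: "\<forall>t<s. \<zeta> t \<in> Z"
      and \<zeta>b: "(\<Sum>\<iota>\<in>I. (\<Sum>t<s. Y (\<zeta> t) \<iota> - D \<iota>)\<^sup>2) \<le> real s * (\<Sum>z\<in>Z. p z * (\<Sum>\<iota>\<in>I. (Y z \<iota> - D \<iota>)\<^sup>2))"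
      using sampling[OF fZ Zne fI p0 p1 DY] by blast
    have Yb: "\<bar>Y z \<iota>\<bar> \<le> W" if "z \<in> Z" "\<iota> \<in> I" for z \<iota>
    proof -
      have "\<bar>Y z \<iota>\<bar> = W * (\<bar>sgn (w z)\<bar> * \<bar>a (fst \<iota>) z\<bar> * \<bar>g (snd \<iota>) z\<bar>)"
        unfolding Y_def using W0 by (simp add: abs_mult)
      also have "\<dots> \<le> W * 1"
        using that ab W0 unfolding I_def
        by (intro mult_left_mono) (auto intro!: mult_le_one simp: abs_sgn_eq)
      finally show ?thesis by simp
    qed
    have Db: "\<bar>D \<iota>\<bar> \<le> W" if "\<iota> \<in> I" for \<iota>
    proof -
      have "\<bar>D \<iota>\<bar> \<le> (\<Sum>z\<in>Z. \<bar>w z * a (fst \<iota>) z * g (snd \<iota>) z\<bar>)" unfolding D_def by (rule sum_abs)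
      also have "\<dots> \<le> (\<Sum>z\<in>Z. \<bar>w z\<bar> * 1)"
        using that ab unfolding I_def
        by (intro sum_mono) (auto simp: abs_mult mult.assoc intro!: mult_left_le mult_le_one)
      finally show ?thesis unfolding W_def by simp
    qed
    have "(\<Sum>z\<in>Z. p z * (\<Sum>\<iota>\<in>I. (Y z \<iota> - D \<iota>)\<^sup>2)) \<le> (\<Sum>z\<in>Z. p z * (\<Sum>\<iota>\<in>I. (2 * W)\<^sup>2))"
    proof (rule sum_mono)
      fix z assume z: "z \<in> Z"
      have "(\<Sum>\<iota>\<in>I. (Y z \<iota> - D \<iota>)\<^sup>2) \<le> (\<Sum>\<iota>\<in>I. (2 * W)\<^sup>2)"
      proof (rule sum_mono)
        fix \<iota> assume "\<iota> \<in> I"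
        then have "\<bar>Y z \<iota> - D \<iota>\<bar> \<le> 2 * W" using Yb[OF z] Db by fastforce
        then show "(Y z \<iota> - D \<iota>)\<^sup>2 \<le> (2 * W)\<^sup>2"
          by (metis abs_ge_zero abs_le_square_iff abs_of_nonneg order_trans)
      qed
      then show "p z * (\<Sum>\<iota>\<in>I. (Y z \<iota> - D \<iota>)\<^sup>2) \<le> p z * (\<Sum>\<iota>\<in>I. (2 * W)\<^sup>2)"
        using p0 z by (intro mult_left_mono) auto
    qed
    also have "\<dots> = (\<Sum>z\<in>Z. p z) * (\<Sum>\<iota>\<in>I. (2 * W)\<^sup>2)" by (simp add: sum_distrib_right)
    also have "\<dots> = real N ^ 2 * (4 * W\<^sup>2)" using p1 unfolding I_def
      by (simp add: power2_eq_square)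
    finally have V: "(\<Sum>\<iota>\<in>I. (\<Sum>t<s. Y (\<zeta> t) \<iota> - D \<iota>)\<^sup>2) \<le> real s * (real N ^ 2 * (4 * W\<^sup>2))"
      using \<zeta>b by (meson order_trans mult_left_mono of_nat_0_le_iff)
    define e where "e \<iota> = (\<Sum>t<s. Y (\<zeta> t) \<iota> - D \<iota>)" for \<iota>
    define \<kappa> where "\<kappa> i = (restrict (\<lambda>t. rd M (a i (\<zeta> t))) {..<s}, restrict (\<lambda>t. rd M (g i (\<zeta> t))) {..<s})" for i
    define Gh where "Gh u v = (\<Sum>t<s. W / s * sgn (w (\<zeta> t)) * (real_of_int (fst u t) / M) * (real_of_int (snd v t) / M))"
      for u :: "(nat \<Rightarrow> int) \<times> (nat \<Rightarrow> int)" and v :: "(nat \<Rightarrow> int) \<times> (nat \<Rightarrow> int)"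
    have \<kappa>K: "\<forall>i<N. \<kappa> i \<in> Kset s M" unfolding \<kappa>_def Kset_def using rd_range[OF M] by auto
    have pt: "\<bar>D (i, j) - Gh (\<kappa> i) (\<kappa> j)\<bar> \<le> \<bar>e (i, j)\<bar> / s + 2 * W / M" if ij: "i < N" "j < N" for i j
    proof -
      let ?ra = "\<lambda>t. real_of_int (rd M (a i (\<zeta> t))) / M"
      let ?rg = "\<lambda>t. real_of_int (rd M (g j (\<zeta> t))) / M"
      have G: "Gh (\<kappa> i) (\<kappa> j) = (\<Sum>t<s. W / s * sgn (w (\<zeta> t)) * ?ra t * ?rg t)"
        unfolding Gh_def \<kappa>_def by (intro sum.cong) auto
      have E: "e (i, j) / s = (\<Sum>t<s. W / s * sgn (w (\<zeta> t)) * a i (\<zeta> t) * g j (\<zeta> t)) - D (i, j)"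
        unfolding e_def Y_def using s by (simp add: sum_subtractf sum_divide_distrib field_simps)
      have eq: "D (i, j) - Gh (\<kappa> i) (\<kappa> j) = - (e (i, j) / s) + (\<Sum>t<s. W / s * sgn (w (\<zeta> t)) * (a i (\<zeta> t) * g j (\<zeta> t) - ?ra t * ?rg t))"
        unfolding E G by (simp add: sum_subtractf algebra_simps)
      have h1: "\<bar>- (e (i, j) / s) + (\<Sum>t<s. W / s * sgn (w (\<zeta> t)) * (a i (\<zeta> t) * g j (\<zeta> t) - ?ra t * ?rg t))\<bar> \<le> \<bar>e (i, j)\<bar> / s + (\<Sum>t<s. \<bar>W / s * sgn (w (\<zeta> t)) * (a i (\<zeta> t) * g j (\<zeta> t) - ?ra t * ?rg t)\<bar>)"
      proof -
        let ?f = "\<lambda>t. W / s * sgn (w (\<zeta> t)) * (a i (\<zeta> t) * g j (\<zeta> t) - ?ra t * ?rg t)"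
        have t1: "\<bar>- (e (i, j) / s) + sum ?f {..<s}\<bar> \<le> \<bar>- (e (i, j) / s)\<bar> + \<bar>sum ?f {..<s}\<bar>" by (rule abs_triangle_ineq)
        have t2: "\<bar>sum ?f {..<s}\<bar> \<le> (\<Sum>t<s. \<bar>?f t\<bar>)" by (rule sum_abs)
        have t3: "\<bar>- (e (i, j) / s)\<bar> = \<bar>e (i, j)\<bar> / s" by (simp add: abs_divide)
        show ?thesis using t1 t2 t3 by linarith
      qed
      have h2: "(\<Sum>t<s. \<bar>W / s * sgn (w (\<zeta> t)) * (a i (\<zeta> t) * g j (\<zeta> t) - ?ra t * ?rg t)\<bar>) \<le> (\<Sum>t<s. W / s * (2 * (1 / M)))"
      proof (rule sum_mono)
        fix t assume "t \<in> {..<s}"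
        then have zt: "\<zeta> t \<in> Z" using \<zeta>Z by auto
        have a1: "\<bar>a i (\<zeta> t)\<bar> \<le> 1" and g1: "\<bar>g j (\<zeta> t)\<bar> \<le> 1" using ab ij zt by auto
        have pe: "\<bar>a i (\<zeta> t) * g j (\<zeta> t) - ?ra t * ?rg t\<bar> \<le> 2 * (1 / M)"
          by (rule prod_err[OF a1 g1 rd_err(1)[OF M a1] rd_err(1)[OF M g1] rd_err(2)[OF M a1]])
        have "\<bar>W / s * sgn (w (\<zeta> t)) * (a i (\<zeta> t) * g j (\<zeta> t) - ?ra t * ?rg t)\<bar>
            = W / s * \<bar>sgn (w (\<zeta> t))\<bar> * \<bar>a i (\<zeta> t) * g j (\<zeta> t) - ?ra t * ?rg t\<bar>"
          using W0 by (simp add: abs_mult)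
        also have "\<dots> \<le> W / s * 1 * (2 * (1 / M))"
          using W0 pe by (intro mult_mono) (auto simp: abs_sgn_eq)
        finally show "\<bar>W / s * sgn (w (\<zeta> t)) * (a i (\<zeta> t) * g j (\<zeta> t) - ?ra t * ?rg t)\<bar> \<le> W / s * (2 * (1 / M))" by simp
      qed
      have h3: "(\<Sum>t<s. W / s * (2 * (1 / M))) = 2 * W / M" using s by simp
      show ?thesis unfolding eq using h1 h2 h3 by linarith
    qed
    have g1: "(\<Sum>i<N. \<Sum>j<N. \<bar>D (i, j) - Gh (\<kappa> i) (\<kappa> j)\<bar>) \<le> (\<Sum>i<N. \<Sum>j<N. (\<bar>e (i, j)\<bar> / s + 2 * W / M))"
      using pt by (intro sum_mono) auto
    have g2: "(\<Sum>i<N. \<Sum>j<N. (\<bar>e (i, j)\<bar> / s + 2 * W / M)) = (\<Sum>\<iota>\<in>I. \<bar>e \<iota>\<bar> / s) + real N ^ 2 * (2 * W / M)"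
      unfolding I_def sum.cartesian_product by (simp add: sum.distrib power2_eq_square)
    have g3: "(\<Sum>\<iota>\<in>I. \<bar>e \<iota>\<bar> / s) \<le> (\<Sum>\<iota>\<in>I. (e \<iota> / s)\<^sup>2 / (2 * \<epsilon>) + \<epsilon> / 2)"
      by (intro sum_mono) (metis abs_divide abs_le_sq abs_of_nat eps)
    have g4: "(\<Sum>\<iota>\<in>I. (e \<iota> / s)\<^sup>2 / (2 * \<epsilon>) + \<epsilon> / 2) = (\<Sum>\<iota>\<in>I. (e \<iota>)\<^sup>2) / (2 * \<epsilon> * s\<^sup>2) + real N ^ 2 * (\<epsilon> / 2)"
      unfolding I_def by (simp add: sum.distrib sum_divide_distrib[symmetric] power_divide power2_eq_square)
    have g5: "(\<Sum>\<iota>\<in>I. (e \<iota>)\<^sup>2) / (2 * \<epsilon> * s\<^sup>2) \<le> real s * (real N ^ 2 * (4 * W\<^sup>2)) / (2 * \<epsilon> * s\<^sup>2)"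
      using V eps unfolding e_def by (intro divide_right_mono) auto
    have g6: "real s * (real N ^ 2 * (4 * W\<^sup>2)) / (2 * \<epsilon> * s\<^sup>2) = real N ^ 2 * (2 * W\<^sup>2 / (\<epsilon> * s))"
      using s eps by (simp add: field_simps power2_eq_square)
    have g7: "2 * W\<^sup>2 / (\<epsilon> * s) \<le> \<epsilon> / 2"
    proof -
      have "W\<^sup>2 \<le> B\<^sup>2" using W0 WB W_def by (simp add: power_mono)
      then have "4 * W\<^sup>2 \<le> real s * \<epsilon>\<^sup>2" using sB by linarith
      then show ?thesis using s eps by (simp add: field_simps power2_eq_square)
    qed
    have g8: "real N ^ 2 * (2 * W\<^sup>2 / (\<epsilon> * s)) \<le> real N ^ 2 * (\<epsilon> / 2)"
      using g7 by (intro mult_left_mono) auto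
    have fin: "(\<Sum>i<N. \<Sum>j<N. \<bar>D (i, j) - Gh (\<kappa> i) (\<kappa> j)\<bar>) \<le> real N ^ 2 * (\<epsilon> / 2) + real N ^ 2 * (2 * W / M) + real N ^ 2 * (\<epsilon> / 2)"
      using g1 g2 g3 g4 g5 g6 g8 by linarith
    have "2 * W / M \<le> 2 * B / M" using WB W_def M by (simp add: divide_right_mono)
    then have "real N ^ 2 * (2 * W / M) \<le> real N ^ 2 * (2 * B / M)" by (intro mult_left_mono) auto
    then have "real N ^ 2 * (\<epsilon> / 2) + real N ^ 2 * (2 * W / M) + real N ^ 2 * (\<epsilon> / 2) \<le> real N ^ 2 * (\<epsilon> + 2 * B / M)"
      by (simp add: distrib_left)
    with fin have "(\<Sum>i<N. \<Sum>j<N. \<bar>D (i, j) - Gh (\<kappa> i) (\<kappa> j)\<bar>) \<le> real N ^ 2 * (\<epsilon> + 2 * B / M)" by linarith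
    then show ?thesis using \<kappa>K unfolding D_def by (intro exI[of _ \<kappa>] exI[of _ Gh]) simp
  qed
qed

lemma block_from_keys:
  assumes fK: "finite K" and kK: "\<forall>i<N. \<kappa> i \<in> K" and sym: "\<And>u v. H u v = H v u"
  shows "block_matrix N (card K) (\<lambda>i j. H (\<kappa> i) (\<kappa> j))"
proof -
  obtain h where h: "bij_betw h {0..<card K} K" using ex_bij_betw_nat_finite[OF fK] by blast
  define P where "P a b = H (h a) (h b)" for a b
  define V where "V a = {i. i < N \<and> \<kappa> i = h a}" for a
  have "(\<forall>a<card K. \<forall>b<card K. P a b = P b a)" unfolding P_def using sym by auto
  moreover have "(\<forall>a<card K. \<forall>b<card K. a \<noteq> b \<longrightarrow> V a \<inter> V b = {})"
    using h unfolding V_def bij_betw_def inj_on_def by auto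
  moreover have "(\<Union>a<card K. V a) = {..<N}"
  proof
    show "(\<Union>a<card K. V a) \<subseteq> {..<N}" unfolding V_def by auto
    show "{..<N} \<subseteq> (\<Union>a<card K. V a)"
    proof
      fix i assume "i \<in> {..<N}"
      then have "\<kappa> i \<in> h ` {0..<card K}" using kK h unfolding bij_betw_def by auto
      then obtain a where "a < card K" "\<kappa> i = h a" by auto
      then show "i \<in> (\<Union>a<card K. V a)" using \<open>i \<in> {..<N}\<close> unfolding V_def by auto
    qed
  qed
  moreover have "(\<forall>a<card K. \<forall>b<card K. \<forall>i\<in>V a. \<forall>j\<in>V b. H (\<kappa> i) (\<kappa> j) = P a b)"
    unfolding V_def P_def by auto
  ultimately show ?thesis unfolding block_matrix_def by blast
qed

lemma pairs_memI: assumes "x \<noteq> y" "x < N" "y < N" shows "{x, y} \<in> pairs N"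
proof (cases "x < y")
  case True
  then show ?thesis using assms unfolding pairs_def by (intro CollectI exI[of _ x] exI[of _ y]) auto
next
  case False
  then show ?thesis using assms
    unfolding pairs_def by (intro CollectI exI[of _ y] exI[of _ x]) auto
qed

lemma pairsE: assumes "e \<in> pairs m" obtains a b where "a < b" "b < m" "e = {a, b}"
  using assms unfolding pairs_def by auto

lemma pairs_MinMax: assumes "e \<in> pairs m"
  shows "Min e < Max e" "Max e < m" "e = {Min e, Max e}"
proof -
  obtain a b where ab: "a < b" "b < m" "e = {a, b}" using pairsE[OF assms] by blast
  then have "Min e = a" "Max e = b" by auto
  then show "Min e < Max e" "Max e < m" "e = {Min e, Max e}" using ab by auto
qed

lemma finite_pairs: "finite (pairs m)"
proof -
  have "pairs m \<subseteq> Pow {..<m}" unfolding pairs_def by auto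
  then show ?thesis by (rule finite_subset) simp
qed

lemma pairs_subset: "e \<in> pairs m \<Longrightarrow> e \<subseteq> {..<m}"
  by (erule pairsE) auto

lemma card_pair: "e \<in> pairs m \<Longrightarrow> card e = 2"
  by (erule pairsE) auto

lemma inj_image_pair:
  assumes q: "q \<in> inj_maps m N" and e: "e \<in> pairs m"
  shows "q ` e \<in> pairs N"
proof -
  obtain a b where ab: "a < b" "b < m" "e = {a, b}" using pairsE[OF e] by blast
  have "q a \<noteq> q b" using q ab unfolding inj_maps_def inj_on_def by auto
  moreover have "q a < N" "q b < N" using q ab unfolding inj_maps_def by auto
  ultimately show ?thesis using ab by (simp add: pairs_memI)
qed

lemma pair_in_pair:
  assumes "f \<in> pairs m" "a \<in> f" "b \<in> f" "a \<noteq> b"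
  shows "f = {a, b}"
  using assms by (elim pairsE) auto

lemma diff_formula:
  fixes X :: "nat set \<Rightarrow> real"
  assumes q: "q \<in> inj_maps m N" and E: "E \<subseteq> pairs m"
  shows "(\<Prod>f\<in>E. (X(e0 := 1)) (q ` f)) - (\<Prod>f\<in>E. (X(e0 := 0)) (q ` f))
       = (\<Sum>f\<in>E. if q ` f = e0 then (\<Prod>f'\<in>E - {f}. X (q ` f')) else 0)"
proof -
  have fE: "finite E" using E finite_pairs finite_subset by blast
  have injim: "f = f'" if "f \<in> E" "f' \<in> E" "q ` f = q ` f'" for f f'
  proof -
    have "inj_on q {..<m}" using q unfolding inj_maps_def by auto
    moreover have "f \<subseteq> {..<m}" "f' \<subseteq> {..<m}" using that E pairs_subset by blast+
    ultimately show ?thesis using that inj_on_image_eq_iff by metis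
  qed
  show ?thesis
  proof (cases "\<exists>f0\<in>E. q ` f0 = e0")
    case True
    then obtain f0 where f0: "f0 \<in> E" "q ` f0 = e0" by blast
    have oth: "\<And>f. f \<in> E - {f0} \<Longrightarrow> q ` f \<noteq> e0" using injim f0 by blast
    have p1: "(\<Prod>f\<in>E. (X(e0 := c)) (q ` f)) = c * (\<Prod>f\<in>E - {f0}. X (q ` f))" for c
    proof -
      have "(\<Prod>f\<in>E. (X(e0 := c)) (q ` f)) = (X(e0 := c)) (q ` f0) * (\<Prod>f\<in>E - {f0}. (X(e0 := c)) (q ` f))"
        using fE f0 by (simp add: prod.remove)
      also have "(\<Prod>f\<in>E - {f0}. (X(e0 := c)) (q ` f)) = (\<Prod>f\<in>E - {f0}. X (q ` f))"
        using oth by (intro prod.cong) auto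
      finally show ?thesis using f0 by simp
    qed
    have "(\<Sum>f\<in>E. if q ` f = e0 then (\<Prod>f'\<in>E - {f}. X (q ` f')) else 0)
        = (if q ` f0 = e0 then (\<Prod>f'\<in>E - {f0}. X (q ` f')) else 0) + (\<Sum>f\<in>E - {f0}. if q ` f = e0 then (\<Prod>f'\<in>E - {f}. X (q ` f')) else 0)"
      using fE f0 by (simp add: sum.remove)
    also have "(\<Sum>f\<in>E - {f0}. if q ` f = e0 then (\<Prod>f'\<in>E - {f}. X (q ` f')) else 0) = 0"
      using oth by (intro sum.neutral) auto
    finally show ?thesis using p1[of 1] p1[of 0] f0 by simp
  next
    case False
    then have "(\<Prod>f\<in>E. (X(e0 := c)) (q ` f)) = (\<Prod>f\<in>E. X (q ` f))" for c
      by (intro prod.cong) auto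
    moreover have "(\<Sum>f\<in>E. if q ` f = e0 then (\<Prod>f'\<in>E - {f}. X (q ` f')) else 0) = 0"
      using False by (intro sum.neutral) auto
    ultimately show ?thesis by simp
  qed
qed

definition ext :: "nat \<Rightarrow> nat \<Rightarrow> nat \<Rightarrow> (nat \<Rightarrow> nat) \<Rightarrow> nat \<Rightarrow> nat \<Rightarrow> nat \<Rightarrow> nat" where
  "ext m a b z i j = (\<lambda>l. if l = a then i else if l = b then j else if l < m then z l else 0)"

definition Xc :: "(nat set \<Rightarrow> real) \<Rightarrow> nat set \<Rightarrow> real" where
  "Xc X e = max 0 (min 1 (X e))"

definition alph :: "nat \<Rightarrow> nat set set \<Rightarrow> nat set \<Rightarrow> (nat set \<Rightarrow> real) \<Rightarrow> (nat \<Rightarrow> nat) \<Rightarrow> nat \<Rightarrow> real" where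
  "alph m E e X z i = (if inj_on z ({..<m} - e) \<and> i \<notin> z ` ({..<m} - e) then 1 else 0) *
     (\<Prod>f\<in>{f\<in>E - {e}. Max e \<notin> f}. Xc X (ext m (Min e) (Max e) z i 0 ` f))"

definition gam :: "nat \<Rightarrow> nat set set \<Rightarrow> nat set \<Rightarrow> (nat set \<Rightarrow> real) \<Rightarrow> (nat \<Rightarrow> nat) \<Rightarrow> nat \<Rightarrow> real" where
  "gam m E e X z j = (if j \<notin> z ` ({..<m} - e) then 1 else 0) *
     (\<Prod>f\<in>{f\<in>E - {e}. Max e \<in> f}. Xc X (ext m (Min e) (Max e) z 0 j ` f))"

lemma Xc_bounds: "0 \<le> Xc X e" "Xc X e \<le> 1" unfolding Xc_def by auto

lemma prod_Xc: "\<bar>\<Prod>f\<in>A. Xc X (h f)\<bar> \<le> 1"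
proof -
  have "0 \<le> (\<Prod>f\<in>A. Xc X (h f))" by (intro prod_nonneg) (simp add: Xc_bounds)
  moreover have "(\<Prod>f\<in>A. Xc X (h f)) \<le> 1" by (intro prod_le_1) (simp_all add: Xc_bounds)
  ultimately show ?thesis by simp
qed

lemma alph_bound: "\<bar>alph m E e X z i\<bar> \<le> 1"
  unfolding alph_def using prod_Xc[of X "\<lambda>f. ext m (Min e) (Max e) z i 0 ` f"] by (simp add: abs_mult)

lemma gam_bound: "\<bar>gam m E e X z i\<bar> \<le> 1"
  unfolding gam_def using prod_Xc[of X "\<lambda>f. ext m (Min e) (Max e) z 0 i ` f"] by (simp add: abs_mult)

lemma ext_inj_iff:
  assumes ab: "a < m" "b < m" "a \<noteq> b" and R: "R = {..<m} - {a, b}"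
    and z: "z \<in> PiE R (\<lambda>_. {..<N})" and ij: "i < N" "j < N" "i \<noteq> j"
  shows "ext m a b z i j \<in> inj_maps m N \<longleftrightarrow> inj_on z R \<and> i \<notin> z ` R \<and> j \<notin> z ` R"
proof -
  let ?q = "ext m a b z i j"
  have eq: "{..<m} = insert a (insert b R)" using ab R by auto
  have c: "\<forall>l\<in>R. ?q l = z l" using R unfolding ext_def by auto
  have qa: "?q a = i" and qb: "?q b = j" unfolding ext_def using ab by auto
  have i1: "inj_on ?q R \<longleftrightarrow> inj_on z R" using c by (intro inj_on_cong) auto
  have i2: "?q ` R = z ` R" using c by auto
  have aR: "a \<notin> R" "b \<notin> R" using R by auto
  have vals: "\<forall>l<m. ?q l < N" using z ij R unfolding ext_def by (auto simp: PiE_iff)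
  have zero: "\<forall>l\<ge>m. ?q l = 0" using ab unfolding ext_def by auto
  have "inj_on ?q {..<m} \<longleftrightarrow> inj_on z R \<and> i \<notin> z ` R \<and> j \<notin> z ` R"
    unfolding eq using aR ab ij qa qb i1 i2 by (auto simp: insert_Diff_if)
  then show ?thesis unfolding inj_maps_def using vals zero by auto
qed

lemma finite_inj_maps: "finite (inj_maps m N)"
proof -
  let ?F = "(\<lambda>z l. if l < m then z l else 0) ` PiE {..<m} (\<lambda>_. {..<N})"
  have "inj_maps m N \<subseteq> ?F"
  proof
    fix q assume q: "q \<in> inj_maps m N"
    have "q = (\<lambda>l. if l < m then restrict q {..<m} l else 0)"
      using q unfolding inj_maps_def by (auto simp: fun_eq_iff)
    moreover have "restrict q {..<m} \<in> PiE {..<m} (\<lambda>_. {..<N})" using q unfolding inj_maps_def by auto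
    ultimately show "q \<in> ?F" by blast
  qed
  moreover have "finite ?F" by (intro finite_imageI finite_PiE) auto
  ultimately show ?thesis by (rule finite_subset)
qed

lemma ext_restrict:
  assumes "\<forall>l\<ge>m. q l = 0" "q a = i" "q b = j" "a < m" "b < m" "R = {..<m} - {a, b}"
  shows "ext m a b (restrict q R) i j l = q l"
proof -
  consider "l = a" | "l \<noteq> a" "l = b" | "l \<noteq> a" "l \<noteq> b" "l < m" | "l \<noteq> a" "l \<noteq> b" "\<not> l < m" by blast
  then show ?thesis
  proof cases
    case 1 then show ?thesis using assms unfolding ext_def by simp
  next
    case 2 then show ?thesis using assms unfolding ext_def by simp
  next
    case 3 then have "l \<in> R" using assms by simp
    then show ?thesis using 3 unfolding ext_def by simp
  next
    case 4 then show ?thesis using assms unfolding ext_def by simp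
  qed
qed

lemma reindex_S:
  fixes X :: "nat set \<Rightarrow> real"
  assumes E: "E \<subseteq> pairs m" and e: "e \<in> E" and ij: "i < N" "j < N" "i \<noteq> j"
    and X01: "\<forall>f\<in>pairs N. 0 \<le> X f \<and> X f \<le> 1"
  shows "(\<Sum>q\<in>inj_maps m N. if q (Min e) = i \<and> q (Max e) = j then (\<Prod>f\<in>E - {e}. X (q ` f)) else 0)
       = (\<Sum>z\<in>PiE ({..<m} - e) (\<lambda>_. {..<N}). alph m E e X z i * gam m E e X z j)"
proof -
  define a where "a = Min e"
  define b where "b = Max e"
  have em: "e \<in> pairs m" using E e by auto
  have ab: "a < b" "b < m" "e = {a, b}" using pairs_MinMax[OF em] unfolding a_def b_def by auto
  define R where "R = {..<m} - e"
  have R': "R = {..<m} - {a, b}" using ab R_def by simp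
  define Q where "Q = {q\<in>inj_maps m N. q a = i \<and> q b = j}"
  define ZS where "ZS = {z\<in>PiE R (\<lambda>_. {..<N}). inj_on z R \<and> i \<notin> z ` R \<and> j \<notin> z ` R}"
  define h where "h q = (\<Prod>f\<in>E - {e}. X (q ` f))" for q
  have fE: "finite E" using E finite_pairs finite_subset by blast
  have LHS: "(\<Sum>q\<in>inj_maps m N. if q a = i \<and> q b = j then h q else 0) = (\<Sum>q\<in>Q. h q)"
    unfolding Q_def using finite_inj_maps by (simp add: sum.inter_filter)
  have EI: "ext m a b z i j \<in> inj_maps m N \<longleftrightarrow> inj_on z R \<and> i \<notin> z ` R \<and> j \<notin> z ` R"
    if "z \<in> PiE R (\<lambda>_. {..<N})" for z
    using ext_inj_iff[OF _ _ _ R' that ij] ab by auto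
  have bij: "bij_betw (\<lambda>z. ext m a b z i j) ZS Q"
  proof (rule bij_betw_byWitness[where f'="\<lambda>q. restrict q R"])
    show "\<forall>z\<in>ZS. restrict (ext m a b z i j) R = z"
    proof
      fix z assume z: "z \<in> ZS"
      show "restrict (ext m a b z i j) R = z"
      proof
        fix l show "restrict (ext m a b z i j) R l = z l"
        proof (cases "l \<in> R")
          case True
          then have "l \<noteq> a" "l \<noteq> b" "l < m" using R' by auto
          then show ?thesis using True unfolding ext_def by simp
        next
          case False
          have zP: "z \<in> PiE R (\<lambda>_. {..<N})" using z unfolding ZS_def by blast
          then have "z l = undefined" using PiE_arb[OF zP False] by simp
          then show ?thesis using False by simp
        qed
      qed
    qed
    show "\<forall>q\<in>Q. ext m a b (restrict q R) i j = q"
    proof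
      fix q assume q: "q \<in> Q"
      show "ext m a b (restrict q R) i j = q"
      proof
        fix l show "ext m a b (restrict q R) i j l = q l"
          using q ab R' unfolding Q_def inj_maps_def by (intro ext_restrict) auto
      qed
    qed
    show "(\<lambda>z. ext m a b z i j) ` ZS \<subseteq> Q"
    proof
      fix q assume "q \<in> (\<lambda>z. ext m a b z i j) ` ZS"
      then obtain z where z: "z \<in> ZS" "q = ext m a b z i j" by blast
      then have "q \<in> inj_maps m N" using EI unfolding ZS_def by auto
      moreover have "q a = i" "q b = j" using z ab unfolding ext_def by auto
      ultimately show "q \<in> Q" unfolding Q_def by auto
    qed
    show "(\<lambda>q. restrict q R) ` Q \<subseteq> ZS"
    proof
      fix z assume "z \<in> (\<lambda>q. restrict q R) ` Q"
      then obtain q where q: "q \<in> Q" "z = restrict q R" by blast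
      have zP: "z \<in> PiE R (\<lambda>_. {..<N})" using q unfolding Q_def inj_maps_def R_def by auto
      have "ext m a b z i j = q"
      proof
        fix l show "ext m a b z i j l = q l"
          unfolding q(2) using q(1) ab R' unfolding Q_def inj_maps_def by (intro ext_restrict) auto
      qed
      then have "ext m a b z i j \<in> inj_maps m N" using q unfolding Q_def by auto
      then show "z \<in> ZS" using EI[OF zP] zP unfolding ZS_def by auto
    qed
  qed
  have "(\<Sum>q\<in>Q. h q) = (\<Sum>z\<in>ZS. h (ext m a b z i j))"
    using sum.reindex_bij_betw[OF bij, of h] by simp
  also have "\<dots> = (\<Sum>z\<in>ZS. alph m E e X z i * gam m E e X z j)"
  proof (rule sum.cong[OF refl])
    fix z assume z: "z \<in> ZS"
    let ?q = "ext m a b z i j"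
    have zP: "z \<in> PiE R (\<lambda>_. {..<N})" and cond: "inj_on z R" "i \<notin> z ` R" "j \<notin> z ` R"
      using z unfolding ZS_def by auto
    have qI: "?q \<in> inj_maps m N" using EI[OF zP] cond by auto
    define A1 where "A1 = {f\<in>E - {e}. b \<notin> f}"
    define A2 where "A2 = {f\<in>E - {e}. b \<in> f}"
    have XX: "Xc X (?q ` f) = X (?q ` f)" if "f \<in> E" for f
    proof -
      have "?q ` f \<in> pairs N" using inj_image_pair[OF qI] that E by auto
      then show ?thesis using X01 unfolding Xc_def by auto
    qed
    have p1: "(\<Prod>f\<in>A1. Xc X (ext m a b z i 0 ` f)) = (\<Prod>f\<in>A1. X (?q ` f))"
    proof (rule prod.cong[OF refl])
      fix f assume f: "f \<in> A1"
      have "ext m a b z i 0 ` f = ?q ` f"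
        using f unfolding A1_def ext_def by (intro image_cong) auto
      then show "Xc X (ext m a b z i 0 ` f) = X (?q ` f)" using XX f unfolding A1_def by auto
    qed
    have p2: "(\<Prod>f\<in>A2. Xc X (ext m a b z 0 j ` f)) = (\<Prod>f\<in>A2. X (?q ` f))"
    proof (rule prod.cong[OF refl])
      fix f assume f: "f \<in> A2"
      have "a \<notin> f"
      proof
        assume "a \<in> f"
        then have "f = {a, b}" using pair_in_pair[of f m a b] f E ab unfolding A2_def by auto
        then show False using f ab unfolding A2_def by auto
      qed
      then have "ext m a b z 0 j ` f = ?q ` f"
        unfolding ext_def by (intro image_cong) auto
      then show "Xc X (ext m a b z 0 j ` f) = X (?q ` f)" using XX f unfolding A2_def by auto
    qed
    have un: "E - {e} = A1 \<union> A2" "A1 \<inter> A2 = {}" "finite A1" "finite A2"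
      unfolding A1_def A2_def using fE by auto
    have "alph m E e X z i * gam m E e X z j = (\<Prod>f\<in>A1. X (?q ` f)) * (\<Prod>f\<in>A2. X (?q ` f))"
      using cond p1 p2 unfolding alph_def gam_def A1_def A2_def R_def a_def b_def by simp
    also have "\<dots> = h ?q" unfolding h_def un(1) by (rule prod.union_disjoint[symmetric]) (use un in auto)
    finally show "h ?q = alph m E e X z i * gam m E e X z j" by simp
  qed
  also have "\<dots> = (\<Sum>z\<in>PiE R (\<lambda>_. {..<N}). alph m E e X z i * gam m E e X z j)"
  proof -
    have fP: "finite (PiE R (\<lambda>_. {..<N}))" unfolding R_def by (intro finite_PiE) auto
    have "(\<Sum>z\<in>ZS. alph m E e X z i * gam m E e X z j)
        = (\<Sum>z\<in>PiE R (\<lambda>_. {..<N}). if inj_on z R \<and> i \<notin> z ` R \<and> j \<notin> z ` R then alph m E e X z i * gam m E e X z j else 0)"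
      unfolding ZS_def using fP by (simp add: sum.inter_filter)
    also have "\<dots> = (\<Sum>z\<in>PiE R (\<lambda>_. {..<N}). alph m E e X z i * gam m E e X z j)"
      by (intro sum.cong) (auto simp: alph_def gam_def R_def)
    finally show ?thesis .
  qed
  finally show ?thesis using LHS unfolding a_def b_def h_def R_def by simp
qed

definition Sfun :: "nat \<Rightarrow> nat set set \<Rightarrow> nat set \<Rightarrow> (nat set \<Rightarrow> real) \<Rightarrow> nat \<Rightarrow> nat \<Rightarrow> nat \<Rightarrow> real" where
  "Sfun m E e X N i j = (\<Sum>z\<in>PiE ({..<m} - e) (\<lambda>_. {..<N}). alph m E e X z i * gam m E e X z j)"

lemma tdens_diff:
  fixes X :: "nat set \<Rightarrow> real"
  assumes E: "E \<subseteq> pairs m" and ij: "i < N" "j < N" "i \<noteq> j"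
    and X01: "\<forall>f\<in>pairs N. 0 \<le> X f \<and> X f \<le> 1"
  shows "tdens m E N (X({i, j} := 1)) - tdens m E N (X({i, j} := 0))
     = (1 / (\<Prod>r<m. real N - real r)) * (\<Sum>e\<in>E. Sfun m E e X N i j + Sfun m E e X N j i)"
proof -
  let ?c = "1 / (\<Prod>r<m. real N - real r)"
  let ?h = "\<lambda>q f. (\<Prod>f'\<in>E - {f}. X (q ` f'))"
  have fE: "finite E" using E finite_pairs finite_subset by blast
  have "tdens m E N (X({i, j} := 1)) - tdens m E N (X({i, j} := 0))
      = ?c * (\<Sum>q\<in>inj_maps m N. (\<Prod>f\<in>E. (X({i, j} := 1)) (q ` f)) - (\<Prod>f\<in>E. (X({i, j} := 0)) (q ` f)))"
    unfolding tdens_def by (simp add: sum_subtractf right_diff_distrib)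
  also have "(\<Sum>q\<in>inj_maps m N. (\<Prod>f\<in>E. (X({i, j} := 1)) (q ` f)) - (\<Prod>f\<in>E. (X({i, j} := 0)) (q ` f)))
      = (\<Sum>q\<in>inj_maps m N. \<Sum>f\<in>E. if q ` f = {i, j} then ?h q f else 0)"
    by (intro sum.cong[OF refl] diff_formula[OF _ E])
  also have "\<dots> = (\<Sum>f\<in>E. \<Sum>q\<in>inj_maps m N. if q ` f = {i, j} then ?h q f else 0)"
    by (rule sum.swap)
  also have "\<dots> = (\<Sum>f\<in>E. Sfun m E f X N i j + Sfun m E f X N j i)"
  proof (rule sum.cong[OF refl])
    fix f assume f: "f \<in> E"
    have fm: "f \<in> pairs m" using f E by auto
    have split: "(if q ` f = {i, j} then ?h q f else 0)
        = (if q (Min f) = i \<and> q (Max f) = j then ?h q f else 0) + (if q (Min f) = j \<and> q (Max f) = i then ?h q f else 0)" for q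
    proof -
      have "q ` f = {q (Min f), q (Max f)}" using pairs_MinMax(3)[OF fm] by (metis image_empty image_insert)
      then have "q ` f = {i, j} \<longleftrightarrow> (q (Min f) = i \<and> q (Max f) = j) \<or> (q (Min f) = j \<and> q (Max f) = i)"
        by (simp add: doubleton_eq_iff)
      then show ?thesis using ij by auto
    qed
    have "(\<Sum>q\<in>inj_maps m N. if q ` f = {i, j} then ?h q f else 0)
       = (\<Sum>q\<in>inj_maps m N. if q (Min f) = i \<and> q (Max f) = j then ?h q f else 0)
         + (\<Sum>q\<in>inj_maps m N. if q (Min f) = j \<and> q (Max f) = i then ?h q f else 0)"
      unfolding split by (rule sum.distrib)
    also have "\<dots> = Sfun m E f X N i j + Sfun m E f X N j i"
      unfolding Sfun_def using reindex_S[OF E f ij X01] reindex_S[OF E f ij(2) ij(1) ij(3)[symmetric] X01] by simp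
    finally show "(\<Sum>q\<in>inj_maps m N. if q ` f = {i, j} then ?h q f else 0) = Sfun m E f X N i j + Sfun m E f X N j i" .
  qed
  finally show ?thesis .
qed

definition cst :: "nat \<Rightarrow> (nat \<Rightarrow> real) \<Rightarrow> (nat \<Rightarrow> nat) \<Rightarrow> nat \<Rightarrow> real" where
  "cst N \<beta> m k = real N * (real N - 1) / 2 * \<beta> k * (1 / (\<Prod>r<m k. real N - real r))"

lemma sum_alg:
  fixes c :: real and b u v :: "nat \<Rightarrow> real"
  shows "(c * (\<Sum>k<L. b k * u k) - c * (\<Sum>k<L. b k * v k)) / 2 = (\<Sum>k<L. c / 2 * b k * (u k - v k))"
proof -
  have "(\<Sum>k<L. b k * u k) - (\<Sum>k<L. b k * v k) = (\<Sum>k<L. b k * (u k - v k))"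
    by (simp add: sum_subtractf[symmetric] right_diff_distrib)
  then have "(c * (\<Sum>k<L. b k * u k) - c * (\<Sum>k<L. b k * v k)) / 2 = c / 2 * (\<Sum>k<L. b k * (u k - v k))"
    by (simp add: right_diff_distrib[symmetric])
  also have "\<dots> = (\<Sum>k<L. c / 2 * b k * (u k - v k))" by (simp add: sum_distrib_left mult.assoc)
  finally show ?thesis .
qed

lemma pderiv_decomp:
  fixes X :: "nat set \<Rightarrow> real"
  assumes G: "\<forall>k<L. simple_graph (m k) (E k)" and ij: "i < N" "j < N" "i \<noteq> j"
    and X01: "\<forall>f\<in>pairs N. 0 \<le> X f \<and> X f \<le> 1"
  shows "pderiv_e (fsub L m E \<beta> N) {i, j} X
     = (\<Sum>k<L. \<Sum>e\<in>E k. cst N \<beta> m k * (Sfun (m k) (E k) e X N i j + Sfun (m k) (E k) e X N j i))"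
proof -
  have "pderiv_e (fsub L m E \<beta> N) {i, j} X
     = (\<Sum>k<L. real N * (real N - 1) / 2 * \<beta> k * (tdens (m k) (E k) N (X({i, j} := 1)) - tdens (m k) (E k) N (X({i, j} := 0))))"
    unfolding pderiv_e_def fsub_def by (rule sum_alg)
  also have "\<dots> = (\<Sum>k<L. \<Sum>e\<in>E k. cst N \<beta> m k * (Sfun (m k) (E k) e X N i j + Sfun (m k) (E k) e X N j i))"
  proof (rule sum.cong[OF refl])
    fix k assume "k \<in> {..<L}"
    then have E: "E k \<subseteq> pairs (m k)" using G unfolding simple_graph_def by auto
    show "real N * (real N - 1) / 2 * \<beta> k * (tdens (m k) (E k) N (X({i, j} := 1)) - tdens (m k) (E k) N (X({i, j} := 0)))
        = (\<Sum>e\<in>E k. cst N \<beta> m k * (Sfun (m k) (E k) e X N i j + Sfun (m k) (E k) e X N j i))"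
      unfolding tdens_diff[OF E ij X01] cst_def by (simp add: sum_distrib_left mult.assoc)
  qed
  finally show ?thesis .
qed

lemma falling_bound:
  assumes m2: "2 \<le> m" and N1: "1 \<le> N"
  shows "real N ^ (m - 2) * (real N * (real N - 1)) * \<bar>1 / (\<Prod>r<m. real N - real r)\<bar> \<le> real m ^ m"
proof (cases "N < m")
  case True
  have z: "(\<Prod>r<m. real N - real r) = 0" using True by (intro prod_zero) auto
  show ?thesis unfolding z by simp
next
  case False
  then have Nm: "m \<le> N" by simp
  have pos: "\<forall>r\<in>{..<m}. 0 < real N - real r" using Nm by auto
  define P where "P = (\<Prod>r<m. real N - real r)"
  have P0: "P > 0" unfolding P_def using pos by (intro prod_pos) auto
  have a: "real N ^ (m - 2) * (real N * (real N - 1)) \<le> real N ^ m"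
  proof -
    have "real N ^ (m - 2) * (real N * (real N - 1)) \<le> real N ^ (m - 2) * (real N * real N)"
      by (intro mult_left_mono) auto
    also have "\<dots> = real N ^ m" using m2
      by (metis le_add_diff_inverse2 power2_eq_square power_add)
    finally show ?thesis .
  qed
  have b: "real N ^ m \<le> real m ^ m * P"
  proof -
    have "(\<Prod>r<m. real N) \<le> (\<Prod>r<m. real m * (real N - real r))"
    proof (rule prod_mono, intro ballI conjI)
      fix r assume r: "r \<in> {..<m}"
      show "0 \<le> real N" by simp
      have r1: "real r \<le> real m - 1" using r by auto
      have "real m * real r \<le> real m * (real m - 1)" using r1 by (intro mult_left_mono) auto
      moreover have "(real m - 1) * real m \<le> (real m - 1) * real N" using Nm m2 by (intro mult_left_mono) auto
      ultimately show "real N \<le> real m * (real N - real r)" by (simp add: algebra_simps)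
    qed
    then show ?thesis unfolding P_def by (simp add: prod.distrib)
  qed
  have "real N ^ (m - 2) * (real N * (real N - 1)) * \<bar>1 / P\<bar> = real N ^ (m - 2) * (real N * (real N - 1)) / P"
    using P0 by simp
  also have "\<dots> \<le> real N ^ m / P" using a P0 by (intro divide_right_mono) auto
  also have "\<dots> \<le> real m ^ m" using b P0 by (simp add: divide_le_eq mult.commute)
  finally show ?thesis unfolding P_def .
qed

definition Bc :: "nat \<Rightarrow> (nat \<Rightarrow> nat) \<Rightarrow> (nat \<Rightarrow> nat set set) \<Rightarrow> (nat \<Rightarrow> real) \<Rightarrow> real" where
  "Bc L m E \<beta> = (\<Sum>k<L. \<bar>\<beta> k\<bar> * real (card (E k)) * real (m k) ^ m k)"

lemma global_repr:
  fixes X :: "nat set \<Rightarrow> real"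
  assumes G: "\<forall>k<L. simple_graph (m k) (E k)" and N2: "2 \<le> N"
    and X01: "\<forall>f\<in>pairs N. 0 \<le> X f \<and> X f \<le> 1"
  shows "\<exists>(Z :: (nat \<times> nat set \<times> bool \<times> (nat \<Rightarrow> nat)) set) w a g. finite Z \<and>
     (\<forall>i<N. \<forall>z\<in>Z. \<bar>a i z\<bar> \<le> 1 \<and> \<bar>g i z\<bar> \<le> 1) \<and> (\<Sum>z\<in>Z. \<bar>w z\<bar>) \<le> Bc L m E \<beta> \<and>
     (\<forall>i<N. \<forall>j<N. i \<noteq> j \<longrightarrow> pderiv_e (fsub L m E \<beta> N) {i, j} X = (\<Sum>z\<in>Z. w z * a i z * g j z))"
proof -
  define PZ where "PZ k e = PiE ({..<m k} - e) (\<lambda>_. {..<N})" for k e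
  define Z where "Z = (SIGMA k:{..<L}. SIGMA e:E k. SIGMA ob:(UNIV::bool set). PZ k e)"
  define w where "w x = cst N \<beta> m (fst x)" for x :: "nat \<times> nat set \<times> bool \<times> (nat \<Rightarrow> nat)"
  define a where "a i x = (case x of (k, e, ob, z) \<Rightarrow> if ob then alph (m k) (E k) e X z i else gam (m k) (E k) e X z i)"
    for i and x :: "nat \<times> nat set \<times> bool \<times> (nat \<Rightarrow> nat)"
  define g where "g i x = (case x of (k, e, ob, z) \<Rightarrow> if ob then gam (m k) (E k) e X z i else alph (m k) (E k) e X z i)"
    for i and x :: "nat \<times> nat set \<times> bool \<times> (nat \<Rightarrow> nat)"
  have fE: "finite (E k)" if "k < L" for k
    using G that finite_pairs finite_subset unfolding simple_graph_def by blast
  have fPZ: "finite (PZ k e)" for k e unfolding PZ_def by (intro finite_PiE) auto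
  have sumZ: "(\<Sum>x\<in>Z. F x) = (\<Sum>k<L. \<Sum>e\<in>E k. \<Sum>ob\<in>(UNIV::bool set). \<Sum>z\<in>PZ k e. F (k, e, ob, z))" for F
  proof -
    have "(\<Sum>k<L. \<Sum>e\<in>E k. \<Sum>ob\<in>(UNIV::bool set). \<Sum>z\<in>PZ k e. F (k, e, ob, z))
        = (\<Sum>k<L. \<Sum>e\<in>E k. \<Sum>x\<in>(SIGMA ob:(UNIV::bool set). PZ k e). F (k, e, x))"
      by (intro sum.cong refl, subst sum.Sigma) (auto simp: fPZ split_def)
    also have "\<dots> = (\<Sum>k<L. \<Sum>x\<in>(SIGMA e:E k. SIGMA ob:(UNIV::bool set). PZ k e). F (k, x))"
      by (intro sum.cong refl, subst sum.Sigma) (auto simp: fPZ fE split_def)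
    also have "\<dots> = (\<Sum>x\<in>Z. F x)" unfolding Z_def
      by (subst sum.Sigma) (auto simp: fPZ fE split_def)
    finally show ?thesis by simp
  qed
  have "finite Z" unfolding Z_def using fE fPZ by (intro finite_SigmaI) auto
  moreover have "\<forall>i<N. \<forall>z\<in>Z. \<bar>a i z\<bar> \<le> 1 \<and> \<bar>g i z\<bar> \<le> 1"
    unfolding a_def g_def by (auto simp: alph_bound gam_bound split: prod.splits)
  moreover have "(\<Sum>z\<in>Z. \<bar>w z\<bar>) \<le> Bc L m E \<beta>"
  proof -
    have "(\<Sum>z\<in>Z. \<bar>w z\<bar>) = (\<Sum>k<L. \<Sum>e\<in>E k. 2 * (real (card (PZ k e)) * \<bar>cst N \<beta> m k\<bar>))"
      unfolding sumZ w_def by (simp add: UNIV_bool)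
    also have "\<dots> \<le> (\<Sum>k<L. \<bar>\<beta> k\<bar> * real (card (E k)) * real (m k) ^ m k)"
    proof (rule sum_mono)
      fix k assume k: "k \<in> {..<L}"
      have Ek: "E k \<subseteq> pairs (m k)" using G k unfolding simple_graph_def by auto
      show "(\<Sum>e\<in>E k. 2 * (real (card (PZ k e)) * \<bar>cst N \<beta> m k\<bar>)) \<le> \<bar>\<beta> k\<bar> * real (card (E k)) * real (m k) ^ m k"
      proof (cases "E k = {}")
        case True then show ?thesis by simp
      next
        case False
        then obtain e0 where "e0 \<in> pairs (m k)" using Ek by auto
        then have m2: "2 \<le> m k" by (auto elim!: pairsE)
        have each: "2 * (real (card (PZ k e)) * \<bar>cst N \<beta> m k\<bar>) \<le> \<bar>\<beta> k\<bar> * real (m k) ^ m k" if e: "e \<in> E k" for e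
        proof -
          have em: "e \<in> pairs (m k)" using e Ek by auto
          have "card ({..<m k} - e) = m k - 2"
            using card_pair[OF em] pairs_subset[OF em] by (simp add: card_Diff_subset finite_subset)
          then have cPZ: "real (card (PZ k e)) = real N ^ (m k - 2)" unfolding PZ_def by (simp add: card_PiE)
          have "2 * (real (card (PZ k e)) * \<bar>cst N \<beta> m k\<bar>)
              = \<bar>\<beta> k\<bar> * (real N ^ (m k - 2) * (real N * (real N - 1)) * \<bar>1 / (\<Prod>r<m k. real N - real r)\<bar>)"
            unfolding cPZ cst_def using N2 by (simp add: abs_mult)
          also have "\<dots> \<le> \<bar>\<beta> k\<bar> * real (m k) ^ m k"
            using falling_bound[OF m2, of N] N2 by (intro mult_left_mono) auto
          finally show ?thesis .
        qed
        have "(\<Sum>e\<in>E k. 2 * (real (card (PZ k e)) * \<bar>cst N \<beta> m k\<bar>)) \<le> (\<Sum>e\<in>E k. \<bar>\<beta> k\<bar> * real (m k) ^ m k)"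
          using each by (rule sum_mono)
        then show ?thesis by (simp add: mult.commute mult.left_commute)
      qed
    qed
    finally show ?thesis unfolding Bc_def .
  qed
  moreover have "\<forall>i<N. \<forall>j<N. i \<noteq> j \<longrightarrow> pderiv_e (fsub L m E \<beta> N) {i, j} X = (\<Sum>z\<in>Z. w z * a i z * g j z)"
  proof (intro allI impI)
    fix i j assume ij: "i < N" "j < N" "i \<noteq> j"
    show "pderiv_e (fsub L m E \<beta> N) {i, j} X = (\<Sum>z\<in>Z. w z * a i z * g j z)"
      unfolding pderiv_decomp[OF G ij X01] sumZ
    proof (intro sum.cong refl)
      fix k e
      show "cst N \<beta> m k * (Sfun (m k) (E k) e X N i j + Sfun (m k) (E k) e X N j i) =
         (\<Sum>ob\<in>(UNIV::bool set). \<Sum>z\<in>PZ k e. w (k, e, ob, z) * a i (k, e, ob, z) * g j (k, e, ob, z))"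
        by (simp add: UNIV_bool w_def a_def g_def Sfun_def PZ_def sum_distrib_left distrib_left mult.commute mult.left_commute add.commute)
    qed
  qed
  ultimately show ?thesis by blast
qed

lemma choose2_real: "real (N choose 2) = real N * (real N - 1) / 2"
proof (induction N)
  case 0 then show ?case by simp
next
  case (Suc n)
  have "(Suc n) choose 2 = (n choose 1) + (n choose 2)"
    by (metis Suc_1 binomial_Suc_Suc)
  then have "real ((Suc n) choose 2) = real n + real (n choose 2)" by simp
  then show ?case using Suc by (simp add: field_simps)
qed

lemma sum_pairs_reindex:
  "(\<Sum>(i, j)\<in>{(i, j). i < j \<and> j < N}. F {i, j}) = (\<Sum>e\<in>pairs N. F e)"
proof -
  let ?P = "{(i, j). i < j \<and> j < N}"
  have im: "pairs N = (\<lambda>(i, j). {i, j}) ` ?P" unfolding pairs_def by auto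
  have inj: "inj_on (\<lambda>(i, j). {i, j}) ?P"
    by (auto simp: inj_on_def doubleton_eq_iff)
  show ?thesis unfolding im by (subst sum.reindex[OF inj]) (simp add: split_def)
qed

lemma sum_sym_le:
  fixes f :: "nat \<Rightarrow> nat \<Rightarrow> real"
  assumes f0: "\<And>i j. f i j \<ge> 0"
  shows "(\<Sum>(i, j)\<in>{(i, j). i < j \<and> j < N}. f i j + f j i) \<le> (\<Sum>i<N. \<Sum>j<N. f i j)"
proof -
  let ?P = "{(i, j). i < j \<and> j < N}"
  let ?P' = "{(i, j). j < i \<and> i < N}"
  have fP: "finite ?P" by (rule finite_subset[of _ "{..<N} \<times> {..<N}"]) auto
  have sw: "?P' = prod.swap ` ?P" by (auto simp: image_iff)
  have "(\<Sum>(i, j)\<in>?P. f j i) = (\<Sum>(i, j)\<in>?P'. f i j)"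
    unfolding sw by (subst sum.reindex) (auto simp: split_def)
  then have "(\<Sum>(i, j)\<in>?P. f i j + f j i) = (\<Sum>(i, j)\<in>?P. f i j) + (\<Sum>(i, j)\<in>?P'. f i j)"
    by (simp add: split_def sum.distrib)
  also have "\<dots> = (\<Sum>(i, j)\<in>?P \<union> ?P'. f i j)"
    by (rule sum.union_disjoint[symmetric]) (use fP sw in auto)
  also have "\<dots> \<le> (\<Sum>(i, j)\<in>{..<N} \<times> {..<N}. f i j)"
    by (rule sum_mono2) (auto simp: f0 split_def)
  also have "\<dots> = (\<Sum>i<N. \<Sum>j<N. f i j)" by (simp add: sum.cartesian_product)
  finally show ?thesis .
qed

theorem theorem14:
  fixes L :: nat and m :: "nat \<Rightarrow> nat" and E :: "nat \<Rightarrow> nat set set"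
    and \<beta> :: "nat \<Rightarrow> real" and \<delta> :: real
  assumes "\<forall>i<L. simple_graph (m i) (E i)"
    and "0 < \<delta>" and "\<delta> < 1"
  shows "\<exists>C::real. C > 0 \<and>
    (\<forall>N\<ge>2. \<forall>X\<in>Xf L m E \<beta> N.
       \<exists>k Xs. real k \<le> C \<and> block_matrix N k Xs \<and>
         dist1 N X Xs \<le> \<delta> * real (N choose 2)
            + 5000 * Cbeta L E \<beta> ^ 2 * real (N choose 2) powr (15/16))"
proof -
  note G = assms(1)
  have dpos: "\<delta> > 0" using assms by simp
  define B where "B = Bc L m E \<beta>"
  have B0: "B \<ge> 0" unfolding B_def Bc_def by (intro sum_nonneg) auto
  define \<epsilon> where "\<epsilon> = \<delta> / 2"
  have eps: "\<epsilon> > 0" unfolding \<epsilon>_def using dpos by simp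
  define s :: nat where "s = nat \<lceil>4 * B\<^sup>2 / \<epsilon>\<^sup>2\<rceil> + 1"
  define M :: nat where "M = nat \<lceil>4 * B / \<delta>\<rceil> + 1"
  have s0: "s > 0" and M0: "M > 0" unfolding s_def M_def by auto
  have sB: "4 * B\<^sup>2 \<le> real s * \<epsilon>\<^sup>2"
  proof -
    have "4 * B\<^sup>2 / \<epsilon>\<^sup>2 \<le> real s" unfolding s_def by linarith
    then show ?thesis using eps by (simp add: divide_le_eq)
  qed
  have MB: "2 * B / M \<le> \<delta> / 2"
  proof -
    have "4 * B / \<delta> \<le> real M" unfolding M_def by linarith
    then have "4 * B \<le> real M * \<delta>" using dpos by (simp add: divide_le_eq)
    then show ?thesis using M0 by (simp add: divide_le_eq field_simps)
  qed
  define C where "C = real (card (Kset s M))"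
  have Cpos: "C > 0" unfolding C_def card_Kset by simp
  show ?thesis
  proof (intro exI[of _ C] conjI allI impI ballI)
    show "C > 0" by (rule Cpos)
    fix N :: nat and X assume N2: "2 \<le> N" and XX: "X \<in> Xf L m E \<beta> N"
    define T where "T = 5000 * Cbeta L E \<beta> ^ 2 * real (N choose 2) powr (15/16)"
    define pd where "pd e = pderiv_e (fsub L m E \<beta> N) e X" for e
    define Yv where "Yv e = (1 + tanh (pd e)) / 2" for e
    have X01: "\<forall>f\<in>pairs N. 0 \<le> X f \<and> X f \<le> 1" using XX unfolding Xf_def by auto
    have XT: "(\<Sum>e\<in>pairs N. \<bar>X e - Yv e\<bar>) \<le> T" using XX unfolding Xf_def T_def Yv_def pd_def by auto
    obtain Z :: "(nat \<times> nat set \<times> bool \<times> (nat \<Rightarrow> nat)) set" and w a g where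
      fZ: "finite Z" and ab: "\<forall>i<N. \<forall>z\<in>Z. \<bar>a i z\<bar> \<le> 1 \<and> \<bar>g i z\<bar> \<le> 1"
      and WB: "(\<Sum>z\<in>Z. \<bar>w z\<bar>) \<le> B"
      and rep: "\<forall>i<N. \<forall>j<N. i \<noteq> j \<longrightarrow> pd {i, j} = (\<Sum>z\<in>Z. w z * a i z * g j z)"
      using global_repr[OF G N2 X01, of \<beta>] unfolding B_def pd_def by blast
    define D where "D i j = (\<Sum>z\<in>Z. w z * a i z * g j z)" for i j
    obtain \<kappa> Gh where \<kappa>K: "\<forall>i<N. \<kappa> i \<in> Kset s M"
      and app: "(\<Sum>i<N. \<Sum>j<N. \<bar>D i j - Gh (\<kappa> i) (\<kappa> j)\<bar>) \<le> real N ^ 2 * (\<epsilon> + 2 * B / M)"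
      using approx[OF fZ ab WB s0 M0 eps sB] unfolding D_def by blast
    define H where "H u v = (1 + tanh ((Gh u v + Gh v u) / 2)) / 2" for u v
    define Xs where "Xs i j = H (\<kappa> i) (\<kappa> j)" for i j
    have blk: "block_matrix N (card (Kset s M)) Xs"
      unfolding Xs_def by (rule block_from_keys[OF finite_Kset \<kappa>K]) (simp add: H_def add.commute)
    let ?P = "{(i, j). i < j \<and> j < N}"
    define f where "f i j = \<bar>D i j - Gh (\<kappa> i) (\<kappa> j)\<bar>" for i j
    have pt: "\<bar>X {i, j} - Xs i j\<bar> \<le> \<bar>X {i, j} - Yv {i, j}\<bar> + (f i j + f j i) / 4"
      if "(i, j) \<in> ?P" for i j
    proof -
      have ij: "i < N" "j < N" "i \<noteq> j" using that by auto
      have d1: "pd {i, j} = D i j" using rep ij unfolding D_def by auto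
      have "pd {j, i} = D j i" using rep ij unfolding D_def by auto
      then have d2: "pd {i, j} = D j i" by (simp add: insert_commute)
      have "\<bar>Yv {i, j} - Xs i j\<bar> = \<bar>tanh (pd {i, j}) - tanh ((Gh (\<kappa> i) (\<kappa> j) + Gh (\<kappa> j) (\<kappa> i)) / 2)\<bar> / 2"
      proof -
        have "Yv {i, j} - Xs i j = (tanh (pd {i, j}) - tanh ((Gh (\<kappa> i) (\<kappa> j) + Gh (\<kappa> j) (\<kappa> i)) / 2)) / 2"
          unfolding Yv_def Xs_def H_def by (simp add: diff_divide_distrib add_divide_distrib)
        then show ?thesis by (metis abs_divide abs_numeral)
      qed
      also have "\<dots> \<le> \<bar>pd {i, j} - (Gh (\<kappa> i) (\<kappa> j) + Gh (\<kappa> j) (\<kappa> i)) / 2\<bar> / 2"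
        by (intro divide_right_mono tanh_lip) auto
      also have "pd {i, j} - (Gh (\<kappa> i) (\<kappa> j) + Gh (\<kappa> j) (\<kappa> i)) / 2 = ((D i j - Gh (\<kappa> i) (\<kappa> j)) + (D j i - Gh (\<kappa> j) (\<kappa> i))) / 2"
        using d1 d2 by (simp add: field_simps)
      also have "\<bar>((D i j - Gh (\<kappa> i) (\<kappa> j)) + (D j i - Gh (\<kappa> j) (\<kappa> i))) / 2\<bar> / 2 \<le> (f i j + f j i) / 4"
        unfolding f_def by (simp add: abs_divide)
      finally have "\<bar>Yv {i, j} - Xs i j\<bar> \<le> (f i j + f j i) / 4" .
      then show ?thesis by linarith
    qed
    have "dist1 N X Xs \<le> (\<Sum>(i, j)\<in>?P. \<bar>X {i, j} - Yv {i, j}\<bar> + (f i j + f j i) / 4)"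
      unfolding dist1_def using pt by (intro sum_mono) auto
    also have "\<dots> = (\<Sum>(i, j)\<in>?P. \<bar>X {i, j} - Yv {i, j}\<bar>) + (\<Sum>(i, j)\<in>?P. f i j + f j i) / 4"
      unfolding split_def by (simp only: sum.distrib sum_divide_distrib add_divide_distrib)
    also have "(\<Sum>(i, j)\<in>?P. \<bar>X {i, j} - Yv {i, j}\<bar>) = (\<Sum>e\<in>pairs N. \<bar>X e - Yv e\<bar>)"
      by (rule sum_pairs_reindex)
    also have "(\<Sum>(i, j)\<in>?P. f i j + f j i) \<le> (\<Sum>i<N. \<Sum>j<N. f i j)"
      by (rule sum_sym_le) (simp add: f_def)
    finally have d: "dist1 N X Xs \<le> (\<Sum>e\<in>pairs N. \<bar>X e - Yv e\<bar>) + (\<Sum>i<N. \<Sum>j<N. f i j) / 4"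
      by simp
    have "(\<Sum>i<N. \<Sum>j<N. f i j) \<le> real N ^ 2 * \<delta>"
    proof -
      have "\<epsilon> + 2 * B / M \<le> \<delta>" using MB unfolding \<epsilon>_def by simp
      then have "real N ^ 2 * (\<epsilon> + 2 * B / M) \<le> real N ^ 2 * \<delta>" by (intro mult_left_mono) auto
      then show ?thesis using app unfolding f_def by linarith
    qed
    moreover have "real N ^ 2 * \<delta> / 4 \<le> \<delta> * real (N choose 2)"
    proof -
      have "real N ^ 2 \<le> 2 * (real N * (real N - 1))" using N2
        by (simp add: power2_eq_square algebra_simps)
      then have "real N ^ 2 / 4 \<le> real (N choose 2)" unfolding choose2_real by simp
      then show ?thesis using dpos by (simp add: mult.commute mult_left_mono)
    qed
    ultimately have "dist1 N X Xs \<le> T + \<delta> * real (N choose 2)" using d XT by linarith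
    then show "\<exists>k Xs. real k \<le> C \<and> block_matrix N k Xs \<and>
         dist1 N X Xs \<le> \<delta> * real (N choose 2) + 5000 * Cbeta L E \<beta> ^ 2 * real (N choose 2) powr (15/16)"
      using blk unfolding C_def T_def by (intro exI[of _ "card (Kset s M)"] exI[of _ Xs]) auto
  qed
qed

end
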